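(* Assume $K_1\subseteq K_2\subseteq\cdots\subseteq K_n\subseteq\mathbb F_q$ are subfields, $d_i=|K_i|$, $n\ge 2$. Let $\delta\ge 2$, $s\in\{1,\dots,n\}$ with $r:=d_s-\delta+1\ge 1$, and let $d=\sum_{i=1}^k(d_i-1)+\ell$ with $0\le k<n$ and $0<\ell\le d_{k+1}-1$. Assume that $n=k+1$ or $d_1\ge 3$. Assume that neither (i) [$k+2\le n$ and $d_{k+2}\le d_s$] nor (ii) [$d_s\le d_{k+1}$ and $0\le d_s-(d_{k+1}-\ell)<r$] holds, and that $d_s-(d_{k+1}-\ell)=r$. Then $$W^{(1)}(\mathcal D^{(\delta,s)}_{\mathcal X}(d))=\begin{cases} d_n-\ell+1 & \text{if } n=k+1,\\ (d_{k+1}-\ell+1)(d_{k+2}-1)\prod_{i=k+3}^n d_i & \text{if } n>k+1.\end{cases}$$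
   Context: $\mathcal X=K_1\times\cdots\times K_n=\{\boldsymbol\alpha_1,\dots,\boldsymbol\alpha_m\}$ (fixed enumeration), $m=\prod d_i$; $\Psi:\mathbb F_q[X_1,\dots,X_n]\to\mathbb F_q^m$, $f\mapsto(f(\boldsymbol\alpha_1),\dots,f(\boldsymbol\alpha_m))$. For $d\ge 0$, $\mathbb F_q[X_1,\dots,X_n]_{\le d}$ is the space of polynomials of degree at most $d$ together with $0$. $\mathcal P^{(\delta,s)}_d$ is the set of $f\in\mathbb F_q[X_1,\dots,X_n]_{\le d}$ with $\deg_{X_s}f<d_s-\delta+1$, together with $0$, and $\mathcal D^{(\delta,s)}_{\mathcal X}(d)=\Psi(\mathcal P^{(\delta,s)}_d)$. $W^{(1)}(C)$ is the minimum Hamming distance of a linear code $C$. Empty products equal $1$. *)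

theory Defs
  imports Main "HOL-Library.Poly_Mapping" "HOL-Library.FuncSet"
begin

type_synonym 'a mpoly = "(nat \<Rightarrow>\<^sub>0 nat) \<Rightarrow>\<^sub>0 'a"

definition is_subfield :: "'a::field set \<Rightarrow> bool" where
  "is_subfield K \<longleftrightarrow> 0 \<in> K \<and> 1 \<in> K \<and> (\<forall>x\<in>K. \<forall>y\<in>K. x + y \<in> K \<and> x * y \<in> K)
     \<and> (\<forall>x\<in>K. - x \<in> K) \<and> (\<forall>x\<in>K. x \<noteq> 0 \<longrightarrow> inverse x \<in> K)"

definition mon_deg :: "(nat \<Rightarrow>\<^sub>0 nat) \<Rightarrow> nat" where
  "mon_deg m = (\<Sum>i\<in>Poly_Mapping.keys m. Poly_Mapping.lookup m i)"

definition in_vars :: "nat \<Rightarrow> 'a::zero mpoly \<Rightarrow> bool" where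
  "in_vars n f \<longleftrightarrow> (\<forall>m\<in>Poly_Mapping.keys f. Poly_Mapping.keys m \<subseteq> {1..n})"

definition mpoly_eval :: "'a::comm_ring_1 mpoly \<Rightarrow> (nat \<Rightarrow> 'a) \<Rightarrow> 'a" where
  "mpoly_eval f a = (\<Sum>m\<in>Poly_Mapping.keys f. Poly_Mapping.lookup f m * (\<Prod>i\<in>Poly_Mapping.keys m. a i ^ Poly_Mapping.lookup m i))"

definition grid :: "nat \<Rightarrow> (nat \<Rightarrow> 'a set) \<Rightarrow> (nat \<Rightarrow> 'a) set" where
  "grid n K = PiE {1..n} K"

text \<open>P^{(delta,s)}_d: polynomials in X_1..X_n of degree at most d with deg_{X_s} < d_s - delta + 1
  (the zero polynomial, having no monomials, is included). Here r = d_s - delta + 1.\<close>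
definition Pds :: "nat \<Rightarrow> nat \<Rightarrow> int \<Rightarrow> int \<Rightarrow> 'a::zero mpoly set" where
  "Pds n s r d = {f. in_vars n f \<and> (\<forall>m\<in>Poly_Mapping.keys f. int (mon_deg m) \<le> d \<and> int (Poly_Mapping.lookup m s) < r)}"

text \<open>The evaluation code Psi(P): codewords are functions on the point set X
  (coordinates indexed by the points of X rather than by a fixed enumeration).\<close>
definition eval_code :: "(nat \<Rightarrow> 'a) set \<Rightarrow> 'a::comm_ring_1 mpoly set \<Rightarrow> ((nat \<Rightarrow> 'a) \<Rightarrow> 'a) set" where
  "eval_code X P = (\<lambda>f. restrict (mpoly_eval f) X) ` P"

definition hweight :: "(nat \<Rightarrow> 'a) set \<Rightarrow> ((nat \<Rightarrow> 'a) \<Rightarrow> 'a::zero) \<Rightarrow> nat" where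
  "hweight X c = card {x\<in>X. c x \<noteq> 0}"

text \<open>Minimum Hamming distance of a linear code = minimum weight of a nonzero codeword.\<close>
definition min_dist :: "(nat \<Rightarrow> 'a) set \<Rightarrow> ((nat \<Rightarrow> 'a) \<Rightarrow> 'a::zero) set \<Rightarrow> nat" where
  "min_dist X C = Min {hweight X c | c. c \<in> C \<and> (\<exists>x\<in>X. c x \<noteq> 0)}"

end

theory Submission
  imports Defs "HOL-Computational_Algebra.Polynomial"
begin

lemma subfield_pow:
  fixes K :: "'a::field set"
  assumes sf: "is_subfield K" and fin: "finite K" and x: "x \<in> K" "x \<noteq> 0"
  shows "x ^ (card K - 1) = 1"
proof -
  let ?U = "K - {0}"
  have inv: "inverse x \<in> K" using sf x unfolding is_subfield_def by blast
  have bij: "bij_betw (\<lambda>y. x * y) ?U ?U"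
  proof (rule bij_betwI[where g="\<lambda>y. inverse x * y"])
    show "(\<lambda>y. x * y) \<in> ?U \<rightarrow> ?U" using sf x unfolding is_subfield_def by auto
    show "(\<lambda>y. inverse x * y) \<in> ?U \<rightarrow> ?U" using sf x inv unfolding is_subfield_def by auto
  qed (use x in \<open>auto simp: field_simps\<close>)
  have "prod (\<lambda>y. x * y) ?U = prod (\<lambda>y. y) ?U"
    using prod.reindex_bij_betw[OF bij, of "\<lambda>y. y"] by simp
  moreover have "prod (\<lambda>y. x * y) ?U = x ^ card ?U * prod (\<lambda>y. y) ?U"
    by (simp add: prod.distrib)
  moreover have "prod (\<lambda>y. y) ?U \<noteq> 0" using fin by simp
  ultimately have "x ^ card ?U = 1" by simp
  moreover have "card ?U = card K - 1" using sf fin unfolding is_subfield_def by simp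
  ultimately show ?thesis by simp
qed

definition rd :: "nat \<Rightarrow> nat \<Rightarrow> nat" where
  "rd q e = (if e = 0 then 0 else (e - 1) mod (q - 1) + 1)"

lemma rd_le: "rd q e \<le> e"
  proof -
  have "(e - 1) mod (q - 1) \<le> e - 1" by (rule mod_less_eq_dividend)
  then show ?thesis unfolding rd_def by (cases e) auto
qed

lemma rd_lt: "q \<ge> 2 \<Longrightarrow> rd q e < q"
  proof -
  assume "q \<ge> 2"
  then have "(e - 1) mod (q - 1) < q - 1" by (intro mod_less_divisor) auto
  then show ?thesis unfolding rd_def by auto
qed

lemma pow_rd:
  fixes K :: "'a::field set"
  assumes sf: "is_subfield K" and fin: "finite K" and x: "x \<in> K"
  shows "x ^ e = x ^ rd (card K) e"
proof (cases "e = 0")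
  case True then show ?thesis by (simp add: rd_def)
next
  case False
  let ?q = "card K"
  have e: "e = ((e - 1) div (?q - 1)) * (?q - 1) + ((e - 1) mod (?q - 1) + 1)"
    using False div_mult_mod_eq[of "e - 1" "?q - 1"] by simp
  show ?thesis
  proof (cases "x = 0")
    case True then show ?thesis using False by (simp add: rd_def)
  next
    case x0: False
    have "x ^ e = (x ^ (?q - 1)) ^ ((e - 1) div (?q - 1)) * x ^ ((e - 1) mod (?q - 1) + 1)"
      by (subst e, simp only: power_add power_mult[symmetric]) (simp add: mult.commute)
    also have "\<dots> = x ^ ((e - 1) mod (?q - 1) + 1)"
      using subfield_pow[OF sf fin x x0] by simp
    finally show ?thesis using False by (simp add: rd_def)
  qed
qed

definition ev :: "nat \<Rightarrow> (nat \<Rightarrow> nat) set \<Rightarrow> ((nat\<Rightarrow>nat) \<Rightarrow> 'a::comm_ring_1) \<Rightarrow> (nat \<Rightarrow> 'a) \<Rightarrow> 'a" where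
  "ev N S c x = (\<Sum>m\<in>S. c m * (\<Prod>i\<in>{1..N}. x i ^ m i))"

lemma prod_Suc_split: "(\<Prod>i\<in>{1..Suc N}. f i) = f (Suc N) * (\<Prod>i\<in>{1..N}. (f i :: 'b::comm_monoid_mult))"
  by (simp add: prod.cl_ivl_Suc mult.commute)

lemma footprint:
  fixes A :: "nat \<Rightarrow> 'a::{field,finite} set" and c :: "(nat\<Rightarrow>nat) \<Rightarrow> 'a"
  assumes "finite S" "S \<noteq> {}" "\<forall>m\<in>S. c m \<noteq> 0" "\<forall>m\<in>S. \<forall>i. i \<notin> {1..N} \<longrightarrow> m i = 0"
    "\<forall>m\<in>S. \<forall>i\<in>{1..N}. m i < card (A i)"
  shows "\<exists>a\<in>S. (\<Prod>i\<in>{1..N}. card (A i) - a i) \<le> card {x\<in>PiE {1..N} A. ev N S c x \<noteq> 0}"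
  using assms
proof (induction N arbitrary: S c)
  case 0
  have "S \<subseteq> {\<lambda>_. 0}" using 0 by auto
  with 0 have S: "S = {\<lambda>_. 0}" by auto
  have "ev 0 S c x = c (\<lambda>_. 0)" for x :: "nat \<Rightarrow> 'a" by (simp add: ev_def S)
  then have "{x\<in>PiE {1..0} A. ev 0 S c x \<noteq> 0} = PiE {} A" using 0 S by auto
  then show ?case using S by simp
next
  case (Suc N)
  define M where "M = Suc N"
  define t where "t = Max ((\<lambda>m. m M) ` S)"
  define St where "St = {m\<in>S. m M = t}"
  have tin: "t \<in> (\<lambda>m. m M) ` S" unfolding t_def using Suc.prems by (intro Max_in) auto
  have tmax: "m \<in> S \<Longrightarrow> m M \<le> t" for m unfolding t_def using Suc.prems by auto
  have St_ne: "St \<noteq> {}" using tin unfolding St_def by auto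
  have St_sub: "St \<subseteq> S" unfolding St_def by auto
  define S' where "S' = (\<lambda>m. m(M:=0)) ` St"
  define c' where "c' = (\<lambda>m'::nat\<Rightarrow>nat. c (m'(M:=t)))"
  have backm: "(m(M:=0))(M:=t) = m" if "m \<in> St" for m using that unfolding St_def by auto
  have inj: "inj_on (\<lambda>m. m(M:=0)) St"
  proof (rule inj_onI)
    fix m1 m2 assume "m1 \<in> St" "m2 \<in> St" "m1(M:=0) = m2(M:=0)"
    then show "m1 = m2" using backm[of m1] backm[of m2] by simp
  qed
  have IH: "\<exists>a\<in>S'. (\<Prod>i\<in>{1..N}. card (A i) - a i) \<le> card {x\<in>PiE {1..N} A. ev N S' c' x \<noteq> 0}"
  proof (rule Suc.IH)
    show "finite S'" unfolding S'_def using Suc.prems St_sub by (intro finite_imageI finite_subset[OF St_sub]) simp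
    show "S' \<noteq> {}" unfolding S'_def using St_ne by auto
    show "\<forall>m\<in>S'. c' m \<noteq> 0" unfolding S'_def c'_def using backm Suc.prems St_sub by auto
    show "\<forall>m\<in>S'. \<forall>i. i \<notin> {1..N} \<longrightarrow> m i = 0"
    proof (intro ballI allI impI)
      fix m' i assume "m' \<in> S'" "i \<notin> {1..N}"
      then obtain m where m: "m \<in> St" "m' = m(M:=0)" unfolding S'_def by auto
      show "m' i = 0"
      proof (cases "i = M")
        case False
        then have "i \<notin> {1..Suc N}" using \<open>i \<notin> {1..N}\<close> by (auto simp: M_def)
        moreover have "m \<in> S" using m St_sub by auto
        ultimately have "m i = 0" using Suc.prems(4) by blast
        then show ?thesis using m False by simp
      qed (simp add: m)
    qed
    show "\<forall>m\<in>S'. \<forall>i\<in>{1..N}. m i < card (A i)"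
    proof (intro ballI)
      fix m' i assume "m' \<in> S'" "i \<in> {1..N}"
      then obtain m where m: "m \<in> St" "m' = m(M:=0)" unfolding S'_def by auto
      have "m \<in> S" using m St_sub by auto
      moreover have "i \<in> {1..Suc N}" "i \<noteq> M" using \<open>i \<in> {1..N}\<close> by (auto simp: M_def)
      ultimately have "m i < card (A i)" using Suc.prems(5) by blast
      then show "m' i < card (A i)" using m \<open>i \<noteq> M\<close> by simp
    qed
  qed
  then obtain a' where a': "a' \<in> S'" and bnd: "(\<Prod>i\<in>{1..N}. card (A i) - a' i) \<le> card {x\<in>PiE {1..N} A. ev N S' c' x \<noteq> 0}"
    by blast
  then obtain a where a: "a \<in> St" and aa: "a' = a(M:=0)" unfolding S'_def by auto
  have aS: "a \<in> S" using a St_sub by auto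
  have aM: "a M = t" using a unfolding St_def by auto
  have "M \<in> {1..Suc N}" by (simp add: M_def)
  then have "a M < card (A M)" using Suc.prems(5) aS by blast
  then have tlt: "t < card (A M)" using aM by simp
  have prodeq: "(\<Prod>i\<in>{1..Suc N}. card (A i) - a i) = (\<Prod>i\<in>{1..N}. card (A i) - a' i) * (card (A M) - t)"
  proof -
    have "(\<Prod>i\<in>{1..Suc N}. card (A i) - a i) = (card (A M) - a M) * (\<Prod>i\<in>{1..N}. card (A i) - a i)"
      unfolding M_def by (rule prod_Suc_split)
    also have "(\<Prod>i\<in>{1..N}. card (A i) - a i) = (\<Prod>i\<in>{1..N}. card (A i) - a' i)"
      by (rule prod.cong) (auto simp: aa M_def)
    finally show ?thesis using aM by simp
  qed
  define T where "T = {x\<in>PiE {1..N} A. ev N S' c' x \<noteq> 0}"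
  define q where "q = (\<lambda>x'::nat\<Rightarrow>'a. (\<Sum>m\<in>S. monom (c m * (\<Prod>i\<in>{1..N}. x' i ^ m i)) (m M)))"
  have finS: "finite S" using Suc.prems by auto
  have c1: "ev (Suc N) S c (x'(M:=y)) = poly (q x') y" for x' y
  proof -
    have "ev (Suc N) S c (x'(M:=y)) = (\<Sum>m\<in>S. c m * (y ^ m M * (\<Prod>i\<in>{1..N}. x' i ^ m i)))"
      unfolding ev_def
    proof (rule sum.cong[OF refl])
      fix m
      have "(\<Prod>i\<in>{1..Suc N}. (x'(M := y)) i ^ m i) = (x'(M := y)) M ^ m M * (\<Prod>i\<in>{1..N}. (x'(M := y)) i ^ m i)"
        unfolding M_def by (rule prod_Suc_split)
      moreover have "(\<Prod>i\<in>{1..N}. (x'(M:=y)) i ^ m i) = (\<Prod>i\<in>{1..N}. x' i ^ m i)"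
        by (rule prod.cong) (auto simp: M_def)
      ultimately show "c m * (\<Prod>i\<in>{1..Suc N}. (x'(M := y)) i ^ m i) = c m * (y ^ m M * (\<Prod>i\<in>{1..N}. x' i ^ m i))"
        by (simp add: M_def)
    qed
    also have "\<dots> = poly (q x') y" unfolding q_def
      by (simp add: poly_sum poly_monom mult_ac)
    finally show ?thesis .
  qed
  have c2: "coeff (q x') t = ev N S' c' x'" for x'
  proof -
    have "coeff (q x') t = (\<Sum>m\<in>S. if m M = t then c m * (\<Prod>i\<in>{1..N}. x' i ^ m i) else 0)"
      unfolding q_def coeff_sum coeff_monom by (rule sum.cong) auto
    also have "\<dots> = (\<Sum>m\<in>St. c m * (\<Prod>i\<in>{1..N}. x' i ^ m i))"
      unfolding St_def by (rule sum.inter_filter[symmetric, OF finS])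
    also have "\<dots> = ev N S' c' x'" unfolding ev_def S'_def sum.reindex[OF inj] o_def
    proof (rule sum.cong[OF refl])
      fix m assume m: "m \<in> St"
      have "c' (m(M:=0)) = c m" using backm[OF m] by (simp add: c'_def)
      moreover have "(\<Prod>i\<in>{1..N}. x' i ^ (m(M:=0)) i) = (\<Prod>i\<in>{1..N}. x' i ^ m i)"
        by (rule prod.cong) (auto simp: M_def)
      ultimately show "c m * (\<Prod>i\<in>{1..N}. x' i ^ m i) = c' (m(M:=0)) * (\<Prod>i\<in>{1..N}. x' i ^ (m(M:=0)) i)"
        by simp
    qed
    finally show ?thesis .
  qed
  have c3: "degree (q x') \<le> t" for x'
    unfolding q_def by (rule degree_sum_le[OF finS]) (rule le_trans[OF degree_monom_le tmax], assumption)
  have c4: "card (A M) - t \<le> card {y\<in>A M. poly (q x') y \<noteq> 0}" if "x' \<in> T" for x'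
  proof -
    have "ev N S' c' x' \<noteq> 0" using that unfolding T_def by blast
    then have "coeff (q x') t \<noteq> 0" using c2[of x'] by simp
    then have "q x' \<noteq> 0" by (metis coeff_0)
    then have "card {y. poly (q x') y = 0} \<le> degree (q x')" by (rule card_poly_roots_bound)
    then have "card {y. poly (q x') y = 0} \<le> t" using c3[of x'] by linarith
    moreover have "card {y\<in>A M. poly (q x') y = 0} \<le> card {y. poly (q x') y = 0}"
      by (rule card_mono) (simp, blast)
    moreover have "card ({y\<in>A M. poly (q x') y \<noteq> 0} \<union> {y\<in>A M. poly (q x') y = 0}) = card {y\<in>A M. poly (q x') y \<noteq> 0} + card {y\<in>A M. poly (q x') y = 0}"
      by (rule card_Un_disjoint) (simp, simp, blast)
    moreover have "{y\<in>A M. poly (q x') y \<noteq> 0} \<union> {y\<in>A M. poly (q x') y = 0} = A M" by blast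
    ultimately show ?thesis by simp
  qed
  define Sig where "Sig = Sigma T (\<lambda>x'. {y\<in>A M. poly (q x') y \<noteq> 0})"
  have finT: "finite T" unfolding T_def by (rule finite_subset[of _ "PiE {1..N} A"]) (blast, rule finite_PiE, simp_all)
  have "card Sig \<le> card {x\<in>PiE {1..Suc N} A. ev (Suc N) S c x \<noteq> 0}"
  proof (rule card_inj_on_le[where f="\<lambda>(x',y). x'(M:=y)"])
    show "inj_on (\<lambda>(x', y). x'(M := y)) Sig"
    proof (rule inj_onI)
      fix p1 p2 assume p1: "p1 \<in> Sig" and p2: "p2 \<in> Sig"
        and e0: "(\<lambda>(x', y). x'(M := y)) p1 = (\<lambda>(x', y). x'(M := y)) p2"
      obtain x1 y1 where p1e: "p1 = (x1, y1)" by (cases p1)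
      obtain x2 y2 where p2e: "p2 = (x2, y2)" by (cases p2)
      have e: "x1(M := y1) = x2(M := y2)" using e0 by (simp add: p1e p2e)
      have M: "M \<notin> {1..N}" by (simp add: M_def)
      have "x1 \<in> PiE {1..N} A" using p1 unfolding p1e Sig_def T_def by simp
      then have u1: "x1 M = undefined" using M by (rule PiE_arb)
      have "x2 \<in> PiE {1..N} A" using p2 unfolding p2e Sig_def T_def by simp
      then have u2: "x2 M = undefined" using M by (rule PiE_arb)
      have "y1 = y2" using fun_cong[OF e, of M] by simp
      moreover have "x1 = x2"
      proof (rule ext)
        fix i show "x1 i = x2 i"
        proof (cases "i = M")
          case True then show ?thesis using u1 u2 by simp
        next
          case False then show ?thesis using fun_cong[OF e, of i] by simp
        qed
      qed
      ultimately show "p1 = p2" by (simp add: p1e p2e)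
    qed
    show "(\<lambda>(x', y). x'(M := y)) ` Sig \<subseteq> {x\<in>PiE {1..Suc N} A. ev (Suc N) S c x \<noteq> 0}"
    proof
      fix z assume "z \<in> (\<lambda>(x', y). x'(M := y)) ` Sig"
      then obtain x' y where xy: "(x', y) \<in> Sig" "z = x'(M := y)" by auto
      then have "x' \<in> PiE {1..N} A" "y \<in> A M" "poly (q x') y \<noteq> 0" unfolding Sig_def T_def by auto
      moreover have "insert M {1..N} = {1..Suc N}" by (auto simp: M_def)
      ultimately have "z \<in> PiE {1..Suc N} A" "ev (Suc N) S c z \<noteq> 0"
        using PiE_fun_upd[of y A M x' "{1..N}"] c1[of x' y] xy(2) by simp_all
      then show "z \<in> {x\<in>PiE {1..Suc N} A. ev (Suc N) S c x \<noteq> 0}" by simp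
    qed
    show "finite {x\<in>PiE {1..Suc N} A. ev (Suc N) S c x \<noteq> 0}"
      by (rule finite_subset[of _ "PiE {1..Suc N} A"]) (blast, rule finite_PiE, simp_all)
  qed
  note cS = this
  have "card Sig = (\<Sum>x'\<in>T. card {y\<in>A M. poly (q x') y \<noteq> 0})"
    unfolding Sig_def using finT by (simp add: card_SigmaI)
  moreover have "(\<Sum>x'\<in>T. card (A M) - t) \<le> (\<Sum>x'\<in>T. card {y\<in>A M. poly (q x') y \<noteq> 0})"
    by (rule sum_mono) (rule c4)
  moreover have "(\<Sum>x'\<in>T. card (A M) - t) = card T * (card (A M) - t)" by simp
  moreover have "(\<Prod>i\<in>{1..N}. card (A i) - a' i) * (card (A M) - t) \<le> card T * (card (A M) - t)"
    using bnd unfolding T_def by simp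
  ultimately have "(\<Prod>i\<in>{1..Suc N}. card (A i) - a i) \<le> card Sig" using prodeq by linarith
  then have "(\<Prod>i\<in>{1..Suc N}. card (A i) - a i) \<le> card {x\<in>PiE {1..Suc N} A. ev (Suc N) S c x \<noteq> 0}"
    using cS by (rule le_trans)
  then show ?case using aS by blast
qed

fun gr :: "int list \<Rightarrow> int \<Rightarrow> int" where
  "gr [] B = 1"
| "gr (u # us) B = (if B < u then (u - B) * prod_list us else gr us (B - (u - 1)))"

lemma prod_list_nonneg: "\<forall>v\<in>set us. (0::int) \<le> v \<Longrightarrow> 0 \<le> prod_list us"
  by (induction us) auto

lemma gr_spill:
  assumes "\<forall>v\<in>set ws. w0 \<le> v" "0 \<le> y" "y \<le> w0 - 1" "y \<le> B"
  shows "gr ws (B - y) \<le> (1 + y) * gr ws B"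
  using assms
proof (induction ws arbitrary: B)
  case Nil then show ?case by simp
next
  case (Cons w ws)
  have P: "0 \<le> prod_list ws" using Cons.prems by (intro prod_list_nonneg) auto
  show ?case
  proof (cases "B < w")
    case True
    then have "B - y < w" using Cons.prems by simp
    have "w - B + y \<le> (1 + y) * (w - B)"
    proof -
      have "0 \<le> y * (w - B - 1)" using True Cons.prems by simp
      then show ?thesis by (simp add: algebra_simps)
    qed
    then have "(w - B + y) * prod_list ws \<le> (1 + y) * (w - B) * prod_list ws"
      using P by (rule mult_right_mono)
    moreover have "w - (B - y) = w - B + y" by simp
    ultimately show ?thesis using True \<open>B - y < w\<close> by (simp only: gr.simps if_True mult.assoc)
  next
    case False
    show ?thesis
    proof (cases "B - y < w")
      case True
      have lhs: "gr (w # ws) (B - y) = (w - B + y) * prod_list ws" using True by simp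
      have rhs: "gr (w # ws) B = gr ws (B - (w - 1))" using False by simp
      show ?thesis
      proof (cases ws)
        case Nil
        then show ?thesis using lhs rhs False by simp
      next
        case (Cons w2 ws')
        define q where "q = B - w + 1"
        have q: "1 \<le> q" "q \<le> y" using False True unfolding q_def by auto
        have w2: "w0 \<le> w2" using Cons.prems \<open>ws = w2 # ws'\<close> by auto
        have "q < w2" using q w2 Cons.prems by simp
        have P': "0 \<le> prod_list ws'" using Cons.prems \<open>ws = w2 # ws'\<close> by (intro prod_list_nonneg) auto
        have g: "gr ws (B - (w - 1)) = (w2 - q) * prod_list ws'"
          using \<open>q < w2\<close> \<open>ws = w2 # ws'\<close> unfolding q_def by (simp add: algebra_simps)
        have "(y - q + 1) * w2 \<le> (1 + y) * (w2 - q)"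
        proof -
          have "0 \<le> q * (w2 - 1 - y)" using q w2 Cons.prems by simp
          then show ?thesis by (simp add: algebra_simps)
        qed
        then have ineq: "(y - q + 1) * w2 * prod_list ws' \<le> (1 + y) * (w2 - q) * prod_list ws'"
          using P' by (rule mult_right_mono)
        have e1: "(w - B + y) * prod_list ws = (y - q + 1) * w2 * prod_list ws'"
          using \<open>ws = w2 # ws'\<close> unfolding q_def by (simp add: algebra_simps)
        have e2: "(1 + y) * gr ws (B - (w - 1)) = (1 + y) * (w2 - q) * prod_list ws'" using g by simp
        show ?thesis unfolding lhs rhs e1 e2 using ineq .
      qed
    next
      case False2: False
      have "gr ws (B - (w - 1) - y) \<le> (1 + y) * gr ws (B - (w - 1))"
        using Cons.IH[of "B - (w - 1)"] Cons.prems False2 by simp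
      then show ?thesis using False False2 by (simp add: algebra_simps)
    qed
  qed
qed

lemma greedy:
  fixes u a :: "nat \<Rightarrow> int"
  assumes "sorted (map u xs)" "\<forall>i\<in>set xs. 0 \<le> a i \<and> a i \<le> u i - 1"
    "sum_list (map a xs) \<le> B"
  shows "gr (map u xs) B \<le> prod_list (map (\<lambda>i. u i - a i) xs)"
  using assms
proof (induction xs arbitrary: B)
  case Nil then show ?case by simp
next
  case (Cons i xs)
  define t where "t = a i"
  define us where "us = map u xs"
  have t: "0 \<le> t" "t \<le> u i - 1" using Cons.prems unfolding t_def by auto
  have srt: "\<forall>v\<in>set us. u i \<le> v" using Cons.prems unfolding us_def by auto
  have rest0: "0 \<le> sum_list (map a xs)" using Cons.prems by (intro sum_list_nonneg) auto
  have IH: "gr us (B - t) \<le> prod_list (map (\<lambda>i. u i - a i) xs)"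
    unfolding us_def using Cons.prems by (intro Cons.IH) (auto simp: t_def)
  have tB: "t \<le> B" using Cons.prems rest0 unfolding t_def by simp
  have key: "gr (u i # us) B \<le> (u i - t) * gr us (B - t)"
  proof (cases "B < u i")
    case True
    show ?thesis
    proof (cases us)
      case Nil
      then show ?thesis using True tB by simp
    next
      case (Cons w2 us')
      have w2: "u i \<le> w2" using srt Cons by auto
      have P': "0 \<le> prod_list us'"
        using srt Cons t by (intro prod_list_nonneg) auto
      have lt: "B - t < w2" using True w2 t by simp
      have "(u i - B) * w2 \<le> (u i - t) * (w2 - (B - t))"
      proof -
        have "0 \<le> (B - t) * (w2 - u i + t)" using tB w2 t by simp
        then show ?thesis by (simp add: algebra_simps)
      qed
      then have "(u i - B) * w2 * prod_list us' \<le> (u i - t) * (w2 - (B - t)) * prod_list us'"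
        using P' by (rule mult_right_mono)
      then show ?thesis using True lt Cons by (simp add: mult.assoc)
    qed
  next
    case False
    have "gr us ((B - t) - (u i - 1 - t)) \<le> (1 + (u i - 1 - t)) * gr us (B - t)"
      by (rule gr_spill[OF srt]) (use t False in auto)
    moreover have "(B - t) - (u i - 1 - t) = B - (u i - 1)" by simp
    ultimately show ?thesis using False by simp
  qed
  also have "\<dots> \<le> (u i - t) * prod_list (map (\<lambda>i. u i - a i) xs)"
    using IH t by (intro mult_left_mono) auto
  finally show ?case unfolding us_def t_def by simp
qed

lemma gr_app:
  assumes "\<forall>v\<in>set us. 1 \<le> v" "1 \<le> g"
  shows "gr (us @ vs) (sum_list (map (\<lambda>v. v - 1) us) + g) = gr vs g"
  using assms
proof (induction us)
  case Nil then show ?case by simp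
next
  case (Cons u us)
  have "0 \<le> sum_list (map (\<lambda>v. v - 1) us)" using Cons.prems by (intro sum_list_nonneg) auto
  then show ?case using Cons by (simp add: algebra_simps)
qed

definition mono_of :: "nat \<Rightarrow> (nat \<Rightarrow> nat) \<Rightarrow> (nat \<Rightarrow>\<^sub>0 nat)" where
  "mono_of n g = Abs_poly_mapping (\<lambda>i. if i \<in> {1..n} then g i else 0)"

lemma lookup_mono_of: "Poly_Mapping.lookup (mono_of n g) = (\<lambda>i. if i \<in> {1..n} then g i else 0)"
proof -
  have "finite {i. (if i \<in> {1..n} then g i else 0) \<noteq> 0}"
    by (rule finite_subset[of _ "{1..n}"]) auto
  then show ?thesis unfolding mono_of_def by simp
qed

lemma keys_mono_of: "Poly_Mapping.keys (mono_of n g) \<subseteq> {1..n}"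
  by (auto simp: in_keys_iff lookup_mono_of split: if_splits)

definition Fc :: "nat \<Rightarrow> (nat \<Rightarrow> 'a::comm_ring_1 poly) \<Rightarrow> (nat \<Rightarrow>\<^sub>0 nat) \<Rightarrow> 'a" where
  "Fc n p m = (if Poly_Mapping.keys m \<subseteq> {1..n} then \<Prod>i\<in>{1..n}. coeff (p i) (Poly_Mapping.lookup m i) else 0)"

definition Box :: "nat \<Rightarrow> (nat \<Rightarrow> 'a::comm_ring_1 poly) \<Rightarrow> (nat \<Rightarrow>\<^sub>0 nat) set" where
  "Box n p = mono_of n ` PiE {1..n} (\<lambda>i. {..degree (p i)})"

lemma finite_Box: "finite (Box n p)"
  unfolding Box_def by (intro finite_imageI finite_PiE) auto

lemma mono_of_restrict:
  assumes "Poly_Mapping.keys m \<subseteq> {1..n}"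
  shows "mono_of n (restrict (Poly_Mapping.lookup m) {1..n}) = m"
proof (rule poly_mapping_eqI)
  fix i show "Poly_Mapping.lookup (mono_of n (restrict (Poly_Mapping.lookup m) {1..n})) i = Poly_Mapping.lookup m i"
    using assms by (auto simp: lookup_mono_of in_keys_iff)
qed

lemma Fc_supp:
  fixes p :: "nat \<Rightarrow> 'a::idom poly"
  assumes "Fc n p m \<noteq> 0"
  shows "Poly_Mapping.keys m \<subseteq> {1..n}" "\<And>i. i \<in> {1..n} \<Longrightarrow> Poly_Mapping.lookup m i \<le> degree (p i)" "m \<in> Box n p"
proof -
  show k: "Poly_Mapping.keys m \<subseteq> {1..n}" using assms unfolding Fc_def by (auto split: if_splits)
  have nz: "coeff (p i) (Poly_Mapping.lookup m i) \<noteq> 0" if "i \<in> {1..n}" for i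
    using assms that k unfolding Fc_def by auto
  show dg: "Poly_Mapping.lookup m i \<le> degree (p i)" if "i \<in> {1..n}" for i
    using nz[OF that] by (rule le_degree)
  have "restrict (Poly_Mapping.lookup m) {1..n} \<in> PiE {1..n} (\<lambda>i. {..degree (p i)})"
    using dg by auto
  then have "mono_of n (restrict (Poly_Mapping.lookup m) {1..n}) \<in> Box n p" unfolding Box_def by (rule imageI)
  then show "m \<in> Box n p" using mono_of_restrict[OF k] by simp
qed

definition mk :: "nat \<Rightarrow> (nat \<Rightarrow> 'a::idom poly) \<Rightarrow> 'a mpoly" where
  "mk n p = Abs_poly_mapping (Fc n p)"

lemma lookup_mk: "Poly_Mapping.lookup (mk n p) = Fc n p"
proof -
  have "finite {m. Fc n p m \<noteq> 0}"
    by (rule finite_subset[OF _ finite_Box[of n p]]) (auto intro: Fc_supp)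
  then show ?thesis unfolding mk_def by simp
qed

lemma keys_mk: "m \<in> Poly_Mapping.keys (mk n p) \<longleftrightarrow> Fc n p m \<noteq> 0"
  by (simp add: in_keys_iff lookup_mk)

lemma prod_keys_eq:
  fixes x :: "nat \<Rightarrow> 'a::comm_monoid_mult" and m :: "nat \<Rightarrow>\<^sub>0 nat"
  assumes "Poly_Mapping.keys m \<subseteq> {1..n}"
  shows "(\<Prod>i\<in>Poly_Mapping.keys m. x i ^ Poly_Mapping.lookup m i) = (\<Prod>i\<in>{1..n}. x i ^ Poly_Mapping.lookup m i)"
  by (rule prod.mono_neutral_left) (use assms in \<open>auto simp: in_keys_iff\<close>)

lemma mk_eval:
  fixes p :: "nat \<Rightarrow> 'a::idom poly"
  shows "mpoly_eval (mk n p) x = (\<Prod>i\<in>{1..n}. poly (p i) (x i))"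
proof -
  let ?P = "PiE {1..n} (\<lambda>i. {..degree (p i)})"
  have inj: "inj_on (mono_of n) ?P"
  proof (rule inj_onI)
    fix g1 g2 assume g: "g1 \<in> ?P" "g2 \<in> ?P" "mono_of n g1 = mono_of n g2"
    have "\<forall>i\<in>{1..n}. g1 i = g2 i"
    proof (intro ballI)
      fix i assume i: "i \<in> {1..n}"
      have "Poly_Mapping.lookup (mono_of n g1) i = Poly_Mapping.lookup (mono_of n g2) i" using g(3) by simp
      then show "g1 i = g2 i" using i by (simp add: lookup_mono_of)
    qed
    then show "g1 = g2" using PiE_ext[OF g(1,2)] by blast
  qed
  have "(\<Prod>i\<in>{1..n}. poly (p i) (x i)) = (\<Prod>i\<in>{1..n}. \<Sum>j\<in>{..degree (p i)}. coeff (p i) j * x i ^ j)"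
    by (simp add: poly_altdef)
  also have "\<dots> = (\<Sum>g\<in>?P. \<Prod>i\<in>{1..n}. coeff (p i) (g i) * x i ^ g i)"
    by (rule prod_sum_PiE) auto
  also have "\<dots> = (\<Sum>m\<in>Box n p. \<Prod>i\<in>{1..n}. coeff (p i) (Poly_Mapping.lookup m i) * x i ^ Poly_Mapping.lookup m i)"
    unfolding Box_def sum.reindex[OF inj] o_def
    by (intro sum.cong refl prod.cong) (auto simp: lookup_mono_of)
  also have "\<dots> = (\<Sum>m\<in>Box n p. Fc n p m * (\<Prod>i\<in>{1..n}. x i ^ Poly_Mapping.lookup m i))"
  proof (rule sum.cong[OF refl])
    fix m assume "m \<in> Box n p"
    then have "Poly_Mapping.keys m \<subseteq> {1..n}" unfolding Box_def using keys_mono_of by auto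
    then show "(\<Prod>i\<in>{1..n}. coeff (p i) (Poly_Mapping.lookup m i) * x i ^ Poly_Mapping.lookup m i) = Fc n p m * (\<Prod>i\<in>{1..n}. x i ^ Poly_Mapping.lookup m i)"
      unfolding Fc_def by (simp add: prod.distrib)
  qed
  also have "\<dots> = (\<Sum>m\<in>Poly_Mapping.keys (mk n p). Fc n p m * (\<Prod>i\<in>{1..n}. x i ^ Poly_Mapping.lookup m i))"
    by (rule sum.mono_neutral_right[OF finite_Box]) (auto simp: keys_mk intro: Fc_supp)
  also have "\<dots> = mpoly_eval (mk n p) x"
    unfolding mpoly_eval_def lookup_mk
  proof (rule sum.cong[OF refl])
    fix m assume "m \<in> Poly_Mapping.keys (mk n p)"
    then have "Fc n p m \<noteq> 0" by (simp add: keys_mk)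
    then have "Poly_Mapping.keys m \<subseteq> {1..n}" by (rule Fc_supp(1))
    then show "Fc n p m * (\<Prod>i\<in>{1..n}. x i ^ Poly_Mapping.lookup m i) = Fc n p m * (\<Prod>i\<in>Poly_Mapping.keys m. x i ^ Poly_Mapping.lookup m i)"
      by (simp add: prod_keys_eq)
  qed
  finally show ?thesis by simp
qed

lemma mk_Pds:
  fixes p :: "nat \<Rightarrow> 'a::idom poly"
  assumes "int (\<Sum>i\<in>{1..n}. degree (p i)) \<le> d" "int (degree (p s)) < r"
  shows "mk n p \<in> Pds n s r d"
  unfolding Pds_def in_vars_def
proof (intro CollectI conjI ballI)
  fix m assume m: "m \<in> Poly_Mapping.keys (mk n p)"
  then have F: "Fc n p m \<noteq> 0" by (simp add: keys_mk)
  show k: "Poly_Mapping.keys m \<subseteq> {1..n}" using Fc_supp(1)[OF F] .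
  have "mon_deg m = (\<Sum>i\<in>{1..n}. Poly_Mapping.lookup m i)"
    unfolding mon_deg_def by (rule sum.mono_neutral_left) (use k in \<open>auto simp: in_keys_iff\<close>)
  also have "\<dots> \<le> (\<Sum>i\<in>{1..n}. degree (p i))" by (rule sum_mono) (rule Fc_supp(2)[OF F])
  finally show "int (mon_deg m) \<le> d" using assms(1) by linarith
  show "int (Poly_Mapping.lookup m s) < r"
  proof (cases "s \<in> {1..n}")
    case True then show ?thesis using Fc_supp(2)[OF F True] assms(2) by linarith
  next
    case False then have "Poly_Mapping.lookup m s = 0" using k by (auto simp: in_keys_iff)
    then show ?thesis using assms(2) by simp
  qed
qed

lemma subfield_card2:
  fixes K :: "'a::{field,finite} set"
  assumes "is_subfield K" shows "2 \<le> card K"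
proof -
  have "{0, 1} \<subseteq> K" using assms unfolding is_subfield_def by auto
  then have "card {0::'a, 1} \<le> card K" by (rule card_mono[rotated]) simp
  then show ?thesis by simp
qed

lemma lower_weight:
  fixes K :: "nat \<Rightarrow> 'a::{field,finite} set" and f :: "'a mpoly"
  assumes sf: "\<forall>i\<in>{1..n}. is_subfield (K i)"
    and f: "f \<in> Pds n s r d" and s: "s \<in> {1..n}"
    and x0: "x0 \<in> grid n K" "mpoly_eval f x0 \<noteq> 0"
  shows "\<exists>a. (\<forall>i\<in>{1..n}. a i < card (K i)) \<and> int (\<Sum>i\<in>{1..n}. a i) \<le> d \<and> int (a s) < r \<and>
    (\<Prod>i\<in>{1..n}. card (K i) - a i) \<le> card {x\<in>grid n K. mpoly_eval f x \<noteq> 0}"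
proof -
  have card2: "2 \<le> card (K i)" if "i \<in> {1..n}" for i using sf that subfield_card2 by blast
  define red where "red = (\<lambda>\<mu>::nat\<Rightarrow>\<^sub>0nat. \<lambda>i. if i \<in> {1..n} then rd (card (K i)) (Poly_Mapping.lookup \<mu> i) else 0)"
  have kv: "Poly_Mapping.keys \<mu> \<subseteq> {1..n}" if "\<mu> \<in> Poly_Mapping.keys f" for \<mu>
    using f that unfolding Pds_def in_vars_def by blast
  have ev1: "mpoly_eval f x = (\<Sum>\<mu>\<in>Poly_Mapping.keys f. Poly_Mapping.lookup f \<mu> * (\<Prod>i\<in>{1..n}. x i ^ red \<mu> i))"
    if x: "x \<in> grid n K" for x
    unfolding mpoly_eval_def
  proof (rule sum.cong[OF refl])
    fix \<mu> assume \<mu>: "\<mu> \<in> Poly_Mapping.keys f"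
    have "(\<Prod>i\<in>Poly_Mapping.keys \<mu>. x i ^ Poly_Mapping.lookup \<mu> i) = (\<Prod>i\<in>{1..n}. x i ^ Poly_Mapping.lookup \<mu> i)"
      by (rule prod_keys_eq[OF kv[OF \<mu>]])
    also have "\<dots> = (\<Prod>i\<in>{1..n}. x i ^ red \<mu> i)"
    proof (rule prod.cong[OF refl])
      fix i assume i: "i \<in> {1..n}"
      have "x i \<in> K i" using x i unfolding grid_def by auto
      then show "x i ^ Poly_Mapping.lookup \<mu> i = x i ^ red \<mu> i"
        unfolding red_def using i sf by (simp add: pow_rd[symmetric])
    qed
    finally show "Poly_Mapping.lookup f \<mu> * (\<Prod>i\<in>Poly_Mapping.keys \<mu>. x i ^ Poly_Mapping.lookup \<mu> i) =
      Poly_Mapping.lookup f \<mu> * (\<Prod>i\<in>{1..n}. x i ^ red \<mu> i)" by simp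
  qed
  define Cf where "Cf = (\<lambda>m. \<Sum>\<mu>\<in>{\<mu>\<in>Poly_Mapping.keys f. red \<mu> = m}. Poly_Mapping.lookup f \<mu>)"
  define S where "S = {m\<in>red ` Poly_Mapping.keys f. Cf m \<noteq> 0}"
  have finS: "finite S" unfolding S_def by simp
  have ev2: "mpoly_eval f x = ev n S Cf x" if x: "x \<in> grid n K" for x
  proof -
    have "mpoly_eval f x = (\<Sum>m\<in>red ` Poly_Mapping.keys f. \<Sum>\<mu>\<in>{\<mu>\<in>Poly_Mapping.keys f. red \<mu> = m}.
            Poly_Mapping.lookup f \<mu> * (\<Prod>i\<in>{1..n}. x i ^ red \<mu> i))"
      unfolding ev1[OF x] by (rule sum.image_gen) simp
    also have "\<dots> = (\<Sum>m\<in>red ` Poly_Mapping.keys f. Cf m * (\<Prod>i\<in>{1..n}. x i ^ m i))"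
      unfolding Cf_def sum_distrib_right by (intro sum.cong refl) auto
    also have "\<dots> = ev n S Cf x" unfolding ev_def S_def
      by (rule sum.mono_neutral_right) auto
    finally show ?thesis .
  qed
  have Sne: "S \<noteq> {}"
  proof
    assume "S = {}"
    then have "ev n S Cf x0 = 0" by (simp add: ev_def)
    then show False using ev2[OF x0(1)] x0(2) by simp
  qed
  have "\<exists>a\<in>S. (\<Prod>i\<in>{1..n}. card (K i) - a i) \<le> card {x\<in>PiE {1..n} K. ev n S Cf x \<noteq> 0}"
  proof (rule footprint[OF finS Sne])
    show "\<forall>m\<in>S. Cf m \<noteq> 0" unfolding S_def by auto
    show "\<forall>m\<in>S. \<forall>i. i \<notin> {1..n} \<longrightarrow> m i = 0" unfolding S_def red_def by auto
    show "\<forall>m\<in>S. \<forall>i\<in>{1..n}. m i < card (K i)" unfolding S_def red_def using card2 rd_lt by auto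
  qed
  then obtain a where aS: "a \<in> S" and bnd: "(\<Prod>i\<in>{1..n}. card (K i) - a i) \<le> card {x\<in>PiE {1..n} K. ev n S Cf x \<noteq> 0}"
    by blast
  have "{x\<in>PiE {1..n} K. ev n S Cf x \<noteq> 0} = {x\<in>grid n K. mpoly_eval f x \<noteq> 0}"
    using ev2 unfolding grid_def by auto
  with bnd have bnd': "(\<Prod>i\<in>{1..n}. card (K i) - a i) \<le> card {x\<in>grid n K. mpoly_eval f x \<noteq> 0}" by simp
  obtain \<mu> where \<mu>: "\<mu> \<in> Poly_Mapping.keys f" "a = red \<mu>" using aS unfolding S_def by auto
  have a1: "\<forall>i\<in>{1..n}. a i < card (K i)" unfolding \<mu>(2) red_def using card2 rd_lt by auto
  have ale: "a i \<le> Poly_Mapping.lookup \<mu> i" for i unfolding \<mu>(2) red_def using rd_le by auto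
  have "(\<Sum>i\<in>{1..n}. a i) \<le> (\<Sum>i\<in>{1..n}. Poly_Mapping.lookup \<mu> i)" by (rule sum_mono) (rule ale)
  also have "\<dots> = mon_deg \<mu>" unfolding mon_deg_def
    by (rule sum.mono_neutral_right) (use kv[OF \<mu>(1)] in \<open>auto simp: in_keys_iff\<close>)
  finally have "int (\<Sum>i\<in>{1..n}. a i) \<le> int (mon_deg \<mu>)" by linarith
  also have "\<dots> \<le> d" using f \<mu>(1) unfolding Pds_def by blast
  finally have a2: "int (\<Sum>i\<in>{1..n}. a i) \<le> d" .
  have "int (a s) \<le> int (Poly_Mapping.lookup \<mu> s)" using ale by simp
  also have "\<dots> < r" using f \<mu>(1) unfolding Pds_def by blast
  finally have a3: "int (a s) < r" .
  show ?thesis using a1 a2 a3 bnd' by blast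
qed

lemma arith_bound:
  fixes dd :: "nat \<Rightarrow> int" and a :: "nat \<Rightarrow> nat" and n s k :: nat and l e :: int
  assumes mono: "\<And>i j. 1 \<le> i \<Longrightarrow> i \<le> j \<Longrightarrow> j \<le> n \<Longrightarrow> dd i \<le> dd j"
    and pos: "\<And>i. i \<in> {1..n} \<Longrightarrow> 1 \<le> dd i"
    and a: "\<And>i. i \<in> {1..n} \<Longrightarrow> int (a i) \<le> dd i - 1"
    and sm: "int (\<Sum>i\<in>{1..n}. a i) \<le> (\<Sum>i=1..k. dd i - 1) + l"
    and as: "int (a s) < dd s - e"
    and e0: "0 \<le> e"
    and le: "dd (k+1) - l = e" and s: "s \<in> {1..n}" and k: "k < n"
    and cs: "n = k+1 \<or> (s \<le> k+1 \<and> dd s < dd (k+2))"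
  shows "(if n = k + 1 then dd n - l + 1 else (dd (k+1) - l + 1) * (dd (k+2) - 1) * (\<Prod>i=k+3..n. dd i))
    \<le> (\<Prod>i\<in>{1..n}. dd i - int (a i))"
proof -
  define b where "b = (\<lambda>i. dd i - int (a i))"
  define ai where "ai = (\<lambda>i. int (a i))"
  have b1: "1 \<le> b i" if "i \<in> {1..n}" for i using a[OF that] unfolding b_def by simp
  have split: "(\<Prod>i\<in>{1..n}. b i) = b s * (\<Prod>i\<in>{1..n}-{s}. b i)"
    using s by (simp add: prod.remove)
  have bs: "b s = (dd s - e - ai s) + e" unfolding b_def ai_def by simp
  show ?thesis
  proof (cases "n = k + 1")
    case True
    have "1 \<le> (\<Prod>i\<in>{1..n}-{s}. b i)" by (rule prod_ge_1) (use b1 in auto)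
    moreover have "e + 1 \<le> b s" using as unfolding b_def by simp
    moreover have "0 \<le> b s" using b1 s by fastforce
    ultimately have "b s * 1 \<le> b s * (\<Prod>i\<in>{1..n}-{s}. b i)" by (intro mult_left_mono) auto
    with \<open>e + 1 \<le> b s\<close> have "e + 1 \<le> b s * (\<Prod>i\<in>{1..n}-{s}. b i)" by simp
    then show ?thesis using True le split unfolding b_def by simp
  next
    case False
    with cs have sk: "s \<le> k+1" and dsc: "dd s < dd (k+2)" by auto
    have kn: "k + 2 \<le> n" using False k by simp
    define xsL where "xsL = [1..<s] @ [Suc s..<k+2]"
    define xsH where "xsH = [k+2..<Suc n]"
    define xs where "xs = xsL @ xsH"
    have s1: "1 \<le> s" using s by simp
    have setL: "set xsL = {1..k+1} - {s}" unfolding xsL_def using s1 sk by auto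
    have setH: "set xsH = {k+2..n}" unfolding xsH_def by auto
    have setxs: "set xs = {1..n} - {s}" unfolding xs_def using setL setH kn sk by auto
    have distL: "distinct xsL" unfolding xsL_def by auto
    have disj: "set xsL \<inter> set xsH = {}" unfolding setL setH by auto
    have "distinct xsH" unfolding xsH_def by (rule distinct_upt)
    then have dist: "distinct xs" unfolding xs_def using distL disj by simp
    have srtL: "sorted_wrt (<) xsL"
    proof -
      have "sorted_wrt (<) [1..<s]" "sorted_wrt (<) [Suc s..<k+2]" by (rule sorted_wrt_upt)+
      moreover have "\<forall>x\<in>set [1..<s]. \<forall>y\<in>set [Suc s..<k+2]. x < y" by (simp only: set_upt) auto
      ultimately show ?thesis unfolding xsL_def sorted_wrt_append by blast
    qed
    have srtH: "sorted_wrt (<) xsH" unfolding xsH_def by (rule sorted_wrt_upt)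
    have lt: "\<forall>x\<in>set xsL. \<forall>y\<in>set xsH. x < y" unfolding setL setH by auto
    have srt: "sorted_wrt (<) xs" unfolding xs_def sorted_wrt_append using srtL srtH lt by simp
    have srtd: "sorted (map dd xs)" unfolding sorted_map
    proof (rule sorted_wrt_mono_rel[OF _ srt])
      fix x y assume xy: "x \<in> set xs" "y \<in> set xs" "x < y"
      have "1 \<le> x" "y \<le> n" using xy(1,2) setxs by auto
      then show "dd x \<le> dd y" using mono xy(3) by simp
    qed
    have sumxs: "sum_list (map ai xs) = (\<Sum>i\<in>{1..n}-{s}. ai i)"
      using sum.distinct_set_conv_list[OF dist, of ai] setxs by simp
    have prodxs: "prod_list (map b xs) = (\<Prod>i\<in>{1..n}-{s}. b i)"
      using prod.distinct_set_conv_list[OF dist, of b] setxs by simp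
    have "(\<Sum>i\<in>{1..n}. ai i) = ai s + (\<Sum>i\<in>{1..n}-{s}. ai i)" using s by (simp add: sum.remove)
    moreover have "(\<Sum>i\<in>{1..n}. ai i) = int (\<Sum>i\<in>{1..n}. a i)" unfolding ai_def by simp
    ultimately have sumB: "sum_list (map ai xs) \<le> (\<Sum>i=1..k. dd i - 1) + l - ai s"
      using sm sumxs by linarith
    have gB0: "gr (map dd xs) ((\<Sum>i=1..k. dd i - 1) + l - ai s) \<le> prod_list (map (\<lambda>i. dd i - ai i) xs)"
    proof (rule greedy[OF srtd])
      show "\<forall>i\<in>set xs. 0 \<le> ai i \<and> ai i \<le> dd i - 1"
      proof
        fix i assume "i \<in> set xs"
        then have "i \<in> {1..n}" using setxs by blast
        then show "0 \<le> ai i \<and> ai i \<le> dd i - 1" using a unfolding ai_def by simp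
      qed
      show "sum_list (map ai xs) \<le> (\<Sum>i=1..k. dd i - 1) + l - ai s" by (rule sumB)
    qed
    have "map (\<lambda>i. dd i - ai i) xs = map b xs" by (simp add: b_def ai_def)
    with gB0 have gB: "gr (map dd xs) ((\<Sum>i=1..k. dd i - 1) + l - ai s) \<le> prod_list (map b xs)" by simp
    define g where "g = dd s - e - ai s"
    have g1: "1 \<le> g" using as unfolding g_def ai_def by simp
    have sumL: "sum_list (map (\<lambda>v. v - 1) (map dd xsL)) = (\<Sum>i\<in>{1..k+1}-{s}. dd i - 1)"
      using sum.distinct_set_conv_list[OF distL, of "\<lambda>i. dd i - 1"] setL by (simp add: o_def)
    have "s \<in> {1..k+1}" using s1 sk by simp
    then have "(\<Sum>i\<in>{1..k+1}. dd i - 1) = (dd s - 1) + (\<Sum>i\<in>{1..k+1}-{s}. dd i - 1)"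
      by (rule sum.remove[OF finite_atLeastAtMost])
    moreover have "(\<Sum>i\<in>{1..k+1}. dd i - 1) = (\<Sum>i=1..k. dd i - 1) + (dd (k+1) - 1)"
      by (simp add: sum.cl_ivl_Suc)
    ultimately have Beq: "(\<Sum>i=1..k. dd i - 1) + l - ai s = sum_list (map (\<lambda>v. v - 1) (map dd xsL)) + g"
      using sumL le unfolding g_def by linarith
    have Lpos: "\<forall>v\<in>set (map dd xsL). 1 \<le> v" using setL pos kn by auto
    have gr1: "gr (map dd xs) ((\<Sum>i=1..k. dd i - 1) + l - ai s) = gr (map dd xsH) g"
      unfolding Beq xs_def map_append by (rule gr_app[OF Lpos g1])
    have e3: "Suc (k+2) = k+3" by simp
    have "xsH = (k+2) # [Suc (k+2)..<Suc n]" unfolding xsH_def using kn by (intro upt_conv_Cons) simp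
    then have "xsH = (k+2) # [k+3..<Suc n]" unfolding e3 .
    then have mH: "map dd xsH = dd (k+2) # map dd [k+3..<Suc n]" by simp
    have glt: "g < dd (k+2)" using dsc as e0 unfolding g_def ai_def by simp
    have gr2: "gr (map dd xsH) g = (dd (k+2) - g) * prod_list (map dd [k+3..<Suc n])"
      unfolding mH using glt by simp
    have pl: "prod_list (map dd [k+3..<Suc n]) = (\<Prod>i=k+3..n. dd i)"
    proof -
      have "prod_list (map dd [k+3..<Suc n]) = prod dd (set [k+3..<Suc n])"
        by (rule prod.distinct_set_conv_list[symmetric]) simp
      also have "set [k+3..<Suc n] = {k+3..n}" by auto
      finally show ?thesis .
    qed
    have grv: "gr (map dd xs) ((\<Sum>i=1..k. dd i - 1) + l - ai s) = (dd (k+2) - g) * (\<Prod>i=k+3..n. dd i)"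
      using gr1 gr2 pl by simp
    define c where "c = dd (k+2)"
    define P where "P = (\<Prod>i=k+3..n. dd i)"
    have P0: "0 \<le> P" unfolding P_def
    proof (rule prod_nonneg)
      fix i assume "i \<in> {k+3..n}"
      then have "i \<in> {1..n}" by simp
      then show "0 \<le> dd i" using pos by force
    qed
    have bsg: "b s = e + g" unfolding g_def b_def ai_def by simp
    have bs0: "0 \<le> b s" using b1 s by fastforce
    have "b s * ((c - g) * P) \<le> b s * prod_list (map b xs)"
      using gB grv bs0 unfolding c_def P_def by (intro mult_left_mono) auto
    moreover have "(e + 1) * (c - 1) \<le> (e + g) * (c - g)"
    proof -
      have "e + g \<le> dd s" unfolding g_def ai_def by simp
      then have "0 \<le> (g - 1) * (c - e - g - 1)" using g1 dsc unfolding c_def by simp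
      then show ?thesis by (simp add: algebra_simps)
    qed
    then have "(e + 1) * (c - 1) * P \<le> (e + g) * (c - g) * P" using P0 by (rule mult_right_mono)
    ultimately have "(e + 1) * (c - 1) * P \<le> b s * prod_list (map b xs)" using bsg by (simp add: mult.assoc)
    then show ?thesis using False le split prodxs unfolding c_def P_def b_def by simp
  qed
qed

definition rp :: "'a::field set \<Rightarrow> 'a poly" where
  "rp R = (\<Prod>\<alpha>\<in>R. [:-\<alpha>, 1:])"

lemma poly_rp: "poly (rp R) y = (\<Prod>\<alpha>\<in>R. y - \<alpha>)"
  unfolding rp_def by (simp add: poly_prod)

lemma degree_rp: "finite R \<Longrightarrow> degree (rp R) = card R"
  unfolding rp_def by (subst degree_prod_eq_sum_degree) auto

lemma poly_rp_nz: "finite R \<Longrightarrow> poly (rp R) y \<noteq> 0 \<longleftrightarrow> y \<notin> R"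
  unfolding poly_rp by (simp add: prod_zero_iff)

lemma mk_weight:
  fixes K R :: "nat \<Rightarrow> 'a::{field,finite} set"
  shows "card {x\<in>grid n K. mpoly_eval (mk n (\<lambda>i. rp (R i))) x \<noteq> 0} = (\<Prod>i\<in>{1..n}. card (K i - R i))"
proof -
  have "{x\<in>grid n K. mpoly_eval (mk n (\<lambda>i. rp (R i))) x \<noteq> 0} = PiE {1..n} (\<lambda>i. K i - R i)"
    unfolding grid_def mk_eval by (auto simp: prod_zero_iff poly_rp_nz PiE_iff extensional_def)
  then show ?thesis by (simp add: card_PiE)
qed

theorem mainTheorem11:
  fixes K :: "nat \<Rightarrow> 'a::{field,finite} set"
    and n s k :: nat and \<delta> l d :: int
  defines "dd \<equiv> \<lambda>i. int (card (K i))"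
  assumes subf: "\<And>i. i \<in> {1..n} \<Longrightarrow> is_subfield (K i)"
    and chain: "\<And>i. 1 \<le> i \<Longrightarrow> i < n \<Longrightarrow> K i \<subseteq> K (Suc i)"
    and n2: "n \<ge> 2"
    and delta2: "\<delta> \<ge> 2"
    and s_rng: "s \<in> {1..n}"
    and r_pos: "dd s - \<delta> + 1 \<ge> 1"
    and k_rng: "k < n"
    and l_rng: "0 < l" "l \<le> dd (k+1) - 1"
    and d_def: "d = (\<Sum>i=1..k. dd i - 1) + l"
    and case_hyp: "n = k + 1 \<or> dd 1 \<ge> 3"
    and not_i: "\<not> (k + 2 \<le> n \<and> dd (k+2) \<le> dd s)"
    and not_ii: "\<not> (dd s \<le> dd (k+1) \<and> 0 \<le> dd s - (dd (k+1) - l) \<and> dd s - (dd (k+1) - l) < dd s - \<delta> + 1)"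
    and eq_r: "dd s - (dd (k+1) - l) = dd s - \<delta> + 1"
  shows "int (min_dist (grid n K) (eval_code (grid n K) (Pds n s (dd s - \<delta> + 1) d))) =
    (if n = k + 1 then dd n - l + 1
     else (dd (k+1) - l + 1) * (dd (k+2) - 1) * (\<Prod>i=k+3..n. dd i))"
proof -
  define e where "e = \<delta> - 1"
  define r where "r = dd s - \<delta> + 1"
  define X where "X = grid n K"
  define C where "C = eval_code X (Pds n s r d)"
  define W where "W = (if n = k + 1 then dd n - l + 1
     else (dd (k+1) - l + 1) * (dd (k+2) - 1) * (\<Prod>i=k+3..n. dd i))"
  have e1: "1 \<le> e" using delta2 unfolding e_def by simp
  have le: "dd (k+1) - l = e" using eq_r unfolding e_def by simp
  have req: "r = dd s - e" unfolding r_def e_def by simp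
  have sfi: "\<forall>i\<in>{1..n}. is_subfield (K i)" using subf by blast
  have dd2: "2 \<le> dd i" if "i \<in> {1..n}" for i
    using subfield_card2[OF subf[OF that]] unfolding dd_def by simp
  have Kmono: "K i \<subseteq> K j" if ij: "1 \<le> i" "i \<le> j" "j \<le> n" for i j
  proof -
    have "j \<le> n \<longrightarrow> K i \<subseteq> K j" using ij(2)
    proof (induction j rule: dec_induct)
      case base then show ?case by simp
    next
      case (step m)
      show ?case
      proof
        assume "Suc m \<le> n"
        then have "K i \<subseteq> K m" "K m \<subseteq> K (Suc m)" using step ij(1) chain[of m] by auto
        then show "K i \<subseteq> K (Suc m)" by blast
      qed
    qed
    then show ?thesis using ij(3) by blast
  qed
  have ddmono: "dd i \<le> dd j" if "1 \<le> i" "i \<le> j" "j \<le> n" for i j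
    using card_mono[OF _ Kmono[OF that]] unfolding dd_def by simp
  have s1: "1 \<le> s" "s \<le> n" using s_rng by auto
  have sk: "s \<le> k + 1"
  proof (rule ccontr)
    assume "\<not> s \<le> k + 1"
    then have "k + 2 \<le> s" by simp
    then have "dd (k+2) \<le> dd s" using ddmono[of "k+2" s] s1 by simp
    then show False using not_i \<open>k + 2 \<le> s\<close> s1 by simp
  qed
  have cs: "n = k+1 \<or> (s \<le> k+1 \<and> dd s < dd (k+2))"
  proof (cases "n = k + 1")
    case False
    then have "k + 2 \<le> n" using k_rng by simp
    then have "dd s < dd (k+2)" using not_i by simp
    then show ?thesis using sk by simp
  qed simp
  have finX: "finite X" unfolding X_def grid_def by (rule finite_PiE) simp_all
  have lower: "W \<le> int (hweight X c)" if c: "c \<in> C" "\<exists>x\<in>X. c x \<noteq> 0" for c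
  proof -
    obtain f where f: "f \<in> Pds n s r d" "c = restrict (mpoly_eval f) X"
      using c(1) unfolding C_def eval_code_def by blast
    obtain x0 where x0: "x0 \<in> X" "c x0 \<noteq> 0" using c(2) by blast
    then have x0': "mpoly_eval f x0 \<noteq> 0" using f(2) by simp
    have hw: "hweight X c = card {x\<in>grid n K. mpoly_eval f x \<noteq> 0}"
      unfolding hweight_def f(2) X_def by (intro arg_cong[where f=card]) auto
    obtain a where a1: "\<forall>i\<in>{1..n}. a i < card (K i)" and a2: "int (\<Sum>i\<in>{1..n}. a i) \<le> d"
      and a3: "int (a s) < r" and a4: "(\<Prod>i\<in>{1..n}. card (K i) - a i) \<le> card {x\<in>grid n K. mpoly_eval f x \<noteq> 0}"
      using lower_weight[OF sfi f(1) s_rng x0(1)[unfolded X_def] x0'] by blast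
    have "W \<le> (\<Prod>i\<in>{1..n}. dd i - int (a i))"
      unfolding W_def
    proof (rule arith_bound[where e=e])
      show "\<And>i j. 1 \<le> i \<Longrightarrow> i \<le> j \<Longrightarrow> j \<le> n \<Longrightarrow> dd i \<le> dd j" by (rule ddmono)
      show "\<And>i. i \<in> {1..n} \<Longrightarrow> 1 \<le> dd i" using dd2 by force
      show "\<And>i. i \<in> {1..n} \<Longrightarrow> int (a i) \<le> dd i - 1" using a1 unfolding dd_def by force
      show "int (\<Sum>i\<in>{1..n}. a i) \<le> (\<Sum>i=1..k. dd i - 1) + l" using a2 d_def by simp
      show "int (a s) < dd s - e" using a3 req by simp
      show "0 \<le> e" using e1 by simp
    qed (use le s_rng k_rng cs in auto)
    also have "(\<Prod>i\<in>{1..n}. dd i - int (a i)) = int (\<Prod>i\<in>{1..n}. card (K i) - a i)"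
      unfolding dd_def of_nat_prod using a1 by (intro prod.cong refl) (simp add: of_nat_diff less_imp_le)
    also have "\<dots> \<le> int (hweight X c)" unfolding of_nat_le_iff using a4 hw by simp
    finally show ?thesis .
  qed
  obtain Rs where Rs: "Rs \<subseteq> K s" "card Rs = nat (dd s - e - 1)"
  proof -
    have "nat (dd s - e - 1) \<le> card (K s)" using e1 unfolding dd_def by simp
    then show ?thesis using that obtain_subset_with_card_n by blast
  qed
  define R where "R = (\<lambda>i. if i = s then Rs else if i \<le> k+1 then K i - {0} else if i = k+2 then {0} else {})"
  have zK: "0 \<in> K i" if "i \<in> {1..n}" for i using subf[OF that] unfolding is_subfield_def by blast
  have RK: "R i \<subseteq> K i" if "i \<in> {1..n}" for i unfolding R_def using Rs zK[OF that] by auto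
  define cR where "cR = (\<lambda>i. int (card (R i)))"
  have cRs: "cR s = dd s - e - 1" unfolding cR_def R_def using Rs e1 r_pos unfolding e_def by simp
  have cRL: "cR i = dd i - 1" if "i \<in> {1..k+1} - {s}" for i
  proof -
    have "i \<in> {1..n}" using that k_rng by auto
    then have "card (K i - {0}) = card (K i) - 1" using zK by (simp add: card_Diff_singleton)
    moreover have "1 \<le> card (K i)" using dd2[OF \<open>i \<in> {1..n}\<close>] unfolding dd_def by simp
    ultimately show ?thesis using that unfolding cR_def R_def dd_def by (auto simp: of_nat_diff)
  qed
  have cRH2: "cR (k+2) = 1" unfolding cR_def R_def using sk by simp
  have cRH3: "cR i = 0" if "i \<in> {k+3..n}" for i unfolding cR_def R_def using that sk by auto
  define p where "p = (\<lambda>i. rp (R i))"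
  define f where "f = mk n p"
  have degp: "degree (p i) = card (R i)" for i unfolding p_def by (rule degree_rp) simp
  have sL: "s \<in> {1..k+1}" using s1 sk by simp
  have sumL: "(\<Sum>i\<in>{1..k+1}. cR i) = d - 1"
  proof -
    have "(\<Sum>i\<in>{1..k+1}. cR i) = cR s + (\<Sum>i\<in>{1..k+1}-{s}. cR i)"
      using sL by (rule sum.remove[OF finite_atLeastAtMost])
    also have "(\<Sum>i\<in>{1..k+1}-{s}. cR i) = (\<Sum>i\<in>{1..k+1}-{s}. dd i - 1)"
      by (rule sum.cong[OF refl]) (rule cRL)
    also have "(\<Sum>i\<in>{1..k+1}. dd i - 1) = (dd s - 1) + (\<Sum>i\<in>{1..k+1}-{s}. dd i - 1)"
      using sL by (rule sum.remove[OF finite_atLeastAtMost])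
    moreover have "(\<Sum>i\<in>{1..k+1}. dd i - 1) = (\<Sum>i=1..k. dd i - 1) + (dd (k+1) - 1)"
      by (simp add: sum.cl_ivl_Suc)
    ultimately show ?thesis using cRs d_def le by linarith
  qed
  have sumH: "(\<Sum>i\<in>{k+2..n}. cR i) \<le> 1"
  proof (cases "n = k + 1")
    case True then show ?thesis by simp
  next
    case False
    then have kn: "k + 2 \<le> n" using k_rng by simp
    have "{k+2..n} = insert (k+2) {k+3..n}" using kn by auto
    then have "(\<Sum>i\<in>{k+2..n}. cR i) = cR (k+2) + (\<Sum>i\<in>{k+3..n}. cR i)" by simp
    also have "(\<Sum>i\<in>{k+3..n}. cR i) = 0" using cRH3 by simp
    finally show ?thesis using cRH2 by simp
  qed
  have split_n: "{1..n} = {1..k+1} \<union> {k+2..n}" using k_rng by auto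
  have disj_n: "{1..k+1} \<inter> {k+2..n} = {}" by auto
  have "int (\<Sum>i\<in>{1..n}. degree (p i)) = (\<Sum>i\<in>{1..n}. cR i)"
    unfolding degp cR_def by simp
  also have "\<dots> = (\<Sum>i\<in>{1..k+1}. cR i) + (\<Sum>i\<in>{k+2..n}. cR i)"
    unfolding split_n by (rule sum.union_disjoint) (simp_all add: disj_n)
  finally have degsum: "int (\<Sum>i\<in>{1..n}. degree (p i)) \<le> d" using sumL sumH by linarith
  have degs: "int (degree (p s)) < r" unfolding degp using cRs req unfolding cR_def by simp
  have fP: "f \<in> Pds n s r d" unfolding f_def by (rule mk_Pds[OF degsum degs])
  have wt: "card {x\<in>grid n K. mpoly_eval f x \<noteq> 0} = (\<Prod>i\<in>{1..n}. card (K i - R i))"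
    unfolding f_def p_def by (rule mk_weight)
  define w where "w = (\<lambda>i. dd i - cR i)"
  have wi: "int (card (K i - R i)) = w i" if "i \<in> {1..n}" for i
    unfolding w_def dd_def cR_def using RK[OF that] by (simp add: card_Diff_subset card_mono of_nat_diff)
  have "int (\<Prod>i\<in>{1..n}. card (K i - R i)) = (\<Prod>i\<in>{1..n}. w i)"
    unfolding of_nat_prod by (rule prod.cong[OF refl]) (rule wi)
  also have "\<dots> = (\<Prod>i\<in>{1..k+1}. w i) * (\<Prod>i\<in>{k+2..n}. w i)"
    unfolding split_n by (rule prod.union_disjoint) (simp_all add: disj_n)
  also have "(\<Prod>i\<in>{1..k+1}. w i) = e + 1"
  proof -
    have "(\<Prod>i\<in>{1..k+1}. w i) = w s * (\<Prod>i\<in>{1..k+1}-{s}. w i)"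
      using sL by (rule prod.remove[OF finite_atLeastAtMost])
    also have "(\<Prod>i\<in>{1..k+1}-{s}. w i) = 1"
      by (rule prod.neutral) (simp add: w_def cRL)
    finally show ?thesis using cRs unfolding w_def by simp
  qed
  finally have wtv: "int (card {x\<in>grid n K. mpoly_eval f x \<noteq> 0}) = (e + 1) * (\<Prod>i\<in>{k+2..n}. w i)"
    using wt by simp
  have Wv: "W = (e + 1) * (\<Prod>i\<in>{k+2..n}. w i)"
  proof (cases "n = k + 1")
    case True then show ?thesis unfolding W_def using le by simp
  next
    case False
    then have kn: "k + 2 \<le> n" using k_rng by simp
    have "{k+2..n} = insert (k+2) {k+3..n}" using kn by auto
    then have "(\<Prod>i\<in>{k+2..n}. w i) = w (k+2) * (\<Prod>i\<in>{k+3..n}. w i)" by simp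
    also have "(\<Prod>i\<in>{k+3..n}. w i) = (\<Prod>i\<in>{k+3..n}. dd i)"
      by (rule prod.cong[OF refl]) (simp add: w_def cRH3)
    finally show ?thesis unfolding W_def using False le cRH2 unfolding w_def by simp
  qed
  have Wpos: "1 \<le> W"
  proof -
    have "1 \<le> (\<Prod>i\<in>{k+2..n}. w i)"
    proof (rule prod_ge_1)
      fix i assume i: "i \<in> {k+2..n}"
      then have "i \<in> {1..n}" by simp
      then have "0 \<le> int (card (K i - R i))" by simp
      have "K i - R i \<noteq> {}"
      proof (cases "i = k + 2")
        case True
        have "1 \<in> K i" using subf[OF \<open>i \<in> {1..n}\<close>] unfolding is_subfield_def by blast
        moreover have "1 \<notin> R i" unfolding R_def using True sk by simp
        ultimately show ?thesis by blast
      next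
        case False
        then have "R i = {}" unfolding R_def using i sk by auto
        then show ?thesis using zK[OF \<open>i \<in> {1..n}\<close>] by blast
      qed
      then have "1 \<le> card (K i - R i)" by (simp add: card_gt_0_iff Suc_le_eq)
      then show "1 \<le> w i" using wi[OF \<open>i \<in> {1..n}\<close>] by simp
    qed
    moreover have "1 \<le> e + 1" using e1 by simp
    ultimately have "1 * 1 \<le> (e + 1) * (\<Prod>i\<in>{k+2..n}. w i)" by (intro mult_mono) auto
    then show ?thesis using Wv by simp
  qed
  define c0 where "c0 = restrict (mpoly_eval f) X"
  have c0C: "c0 \<in> C" unfolding c0_def C_def eval_code_def using fP by blast
  have hw0: "int (hweight X c0) = W"
  proof -
    have "hweight X c0 = card {x\<in>grid n K. mpoly_eval f x \<noteq> 0}"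
      unfolding hweight_def c0_def X_def by (intro arg_cong[where f=card]) auto
    then show ?thesis using wtv Wv by simp
  qed
  have c0nz: "\<exists>x\<in>X. c0 x \<noteq> 0"
  proof (rule ccontr)
    assume "\<not> (\<exists>x\<in>X. c0 x \<noteq> 0)"
    then have "{x\<in>X. c0 x \<noteq> 0} = {}" by blast
    then have "hweight X c0 = 0" unfolding hweight_def by (simp only: card.empty)
    then show False using hw0 Wpos by simp
  qed
  define Ws where "Ws = {hweight X c | c. c \<in> C \<and> (\<exists>x\<in>X. c x \<noteq> 0)}"
  have finWs: "finite Ws"
  proof (rule finite_subset[of _ "{..card X}"])
    show "Ws \<subseteq> {..card X}"
    proof
      fix w assume "w \<in> Ws"
      then obtain c where "w = hweight X c" unfolding Ws_def by blast
      moreover have "card {x\<in>X. c x \<noteq> 0} \<le> card X" using finX by (intro card_mono) auto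
      ultimately show "w \<in> {..card X}" unfolding hweight_def by simp
    qed
  qed simp
  have inWs: "hweight X c0 \<in> Ws" unfolding Ws_def using c0C c0nz by blast
  have minWs: "hweight X c0 \<le> w" if "w \<in> Ws" for w
  proof -
    obtain c where c: "w = hweight X c" "c \<in> C" "\<exists>x\<in>X. c x \<noteq> 0" using \<open>w \<in> Ws\<close> unfolding Ws_def by blast
    have "W \<le> int (hweight X c)" by (rule lower[OF c(2,3)])
    then show ?thesis using hw0 c(1) by simp
  qed
  have "Min Ws = hweight X c0"
    by (rule Min_eqI[OF finWs]) (use minWs inWs in auto)
  then have "int (min_dist X C) = W" unfolding min_dist_def Ws_def[symmetric] using hw0 by simp
  then show ?thesis unfolding X_def C_def W_def r_def .
qed

end
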